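(* Let $p$ be an odd prime and $n=2p^d+p^e$, where $d$ and $e$ are distinct nonnegative integers. (1) If $p=3$ and $n=5$, then $c_{3,0}(5)=6$, $c_{3,1}(5)=8$, and $c_{3,2}(5)=2$. (2) If $p=3$ and $n>5$, then $c_{3,0}(n)=6\cdot2^{n-5}$ and $c_{3,1}(n)=c_{3,-1}(n)=5\cdot 2^{n-5}$. (3) If $p>3$, then $c_{p,0}(n)=6\cdot2^{n-5}$, $c_{p,\pm1}(n)=4\cdot 2^{n-5}$, $c_{p,\pm2}(n)=2^{n-5}$, and $c_{p,i}(n)=0$ for all $i\not\equiv0,\pm1,\pm2\pmod p$.
   Context: For a permutation $w$ of $[n]$, $D(w)=\{i\in[n-1]: w(i)>w(i+1)\}$. A composition $\alpha=(\alpha_1,\ldots,\alpha_\ell)$ of $n$ (written $\alpha\models n$) is a sequence of positive integers with sum $n$, with descent set $D(\alpha)=\{\alpha_1,\alpha_1+\alpha_2,\ldots,\alpha_1+\cdots+\alpha_{\ell-1}\}$. The ribbon number is $r_\alpha=|\{w\in\mathfrak{S}_n: D(w)=D(\alpha)\}|$, and for $i\in\mathbb{Z}_p$, $c_{p,i}(n)=|\{\alpha\models n: r_\alpha\equiv i\pmod p\}|$. *)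

theory Defs
  imports "HOL-Combinatorics.Permutations" "HOL-Number_Theory.Cong"
begin

definition perm_descents :: "nat \<Rightarrow> (nat \<Rightarrow> nat) \<Rightarrow> nat set" where
  "perm_descents n w = {i \<in> {1..<n}. w i > w (Suc i)}"

definition compositions :: "nat \<Rightarrow> nat list set" where
  "compositions n = {\<alpha>. (\<forall>a \<in> set \<alpha>. 0 < a) \<and> sum_list \<alpha> = n}"

definition comp_descents :: "nat list \<Rightarrow> nat set" where
  "comp_descents \<alpha> = {sum_list (take k \<alpha>) | k. 1 \<le> k \<and> k < length \<alpha>}"

definition ribbon :: "nat list \<Rightarrow> nat" where
  "ribbon \<alpha> = card {w. w permutes {1..sum_list \<alpha>} \<and>
      perm_descents (sum_list \<alpha>) w = comp_descents \<alpha>}"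

definition c_count :: "nat \<Rightarrow> int \<Rightarrow> nat \<Rightarrow> nat" where
  "c_count p i n = card {\<alpha> \<in> compositions n. [int (ribbon \<alpha>) = i] (mod int p)}"

end

theory Submission
  imports Defs "HOL-Computational_Algebra.Primes"
begin



lemma transp_less_nat: "transp ((<)::nat \<Rightarrow> nat \<Rightarrow> bool)" by (auto simp: transp_def)

definition Lset :: "nat set \<Rightarrow> nat set \<Rightarrow> nat list set" where
"Lset S T = {xs. distinct xs \<and> set xs = S \<and> (\<forall>i. Suc i < length xs \<longrightarrow> Suc i \<notin> T \<longrightarrow> xs!i < xs!Suc i)}"

function Bet :: "nat \<Rightarrow> nat set \<Rightarrow> nat" where
"Bet m T = (if T \<inter> {1..<m} = {} then 1 else (m choose Max (T \<inter> {1..<m})) * Bet (Max (T \<inter> {1..<m})) T)"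
  by auto
termination
proof (relation "measure fst")
  fix m :: nat and T :: "nat set" assume "T \<inter> {1..<m} \<noteq> {}"
  then have "Max (T \<inter> {1..<m}) \<in> T \<inter> {1..<m}" by (intro Max_in) auto
  then show "((Max (T \<inter> {1..<m}), T), m, T) \<in> measure fst" by auto
qed auto

declare Bet.simps[simp del]

lemma Bet_empty: "T \<inter> {1..<m} = {} \<Longrightarrow> Bet m T = 1"
  by (subst Bet.simps) simp

lemma Bet_step: "T \<inter> {1..<m} \<noteq> {} \<Longrightarrow> Bet m T = (m choose Max (T \<inter> {1..<m})) * Bet (Max (T \<inter> {1..<m})) T"
  by (subst Bet.simps) simp

lemma Bet_cong: "T \<inter> {1..<m} = T' \<inter> {1..<m} \<Longrightarrow> Bet m T = Bet m T'"
proof (induction m T rule: Bet.induct)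
  case (1 m T)
  show ?case
  proof (cases "T \<inter> {1..<m} = {}")
    case True then show ?thesis using 1(2) Bet_empty[of T m] Bet_empty[of T' m] by argo
  next
    case False
    define t where "t = Max (T \<inter> {1..<m})"
    have tin: "t \<in> T \<inter> {1..<m}" unfolding t_def using False by (intro Max_in) auto
    have sub: "{1..<t} \<subseteq> {1..<m}" using tin by auto
    have "T \<inter> {1..<t} = (T \<inter> {1..<m}) \<inter> {1..<t}" using sub by blast
    also have "\<dots> = (T' \<inter> {1..<m}) \<inter> {1..<t}" by (simp only: 1(2))
    also have "\<dots> = T' \<inter> {1..<t}" using sub by blast
    finally have "T \<inter> {1..<t} = T' \<inter> {1..<t}" .
    then have h1: "Bet t T = Bet t T'" by (rule 1(1)[OF False, folded t_def])
    have h2: "Bet m T = (m choose t) * Bet t T" unfolding t_def by (rule Bet_step[OF False])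
    have "T' \<inter> {1..<m} \<noteq> {}" using False 1(2) by simp
    then have h3: "Bet m T' = (m choose t) * Bet t T'" unfolding t_def 1(2) by (rule Bet_step)
    show ?thesis unfolding h2 h3 h1 by (rule refl)
  qed
qed

lemma sorted_Lset:
  assumes "xs \<in> Lset S T" "\<forall>i. Suc i < length xs \<longrightarrow> Suc i \<notin> T"
  shows "xs = sorted_list_of_set S"
proof -
  have "sorted_wrt (<) xs" using assms unfolding Lset_def
    by (subst sorted_wrt_iff_nth_Suc_transp) (auto simp: transp_def)
  moreover have "finite S" using assms unfolding Lset_def by auto
  moreover have "set xs = S" using assms unfolding Lset_def by auto
  ultimately show ?thesis
    using strict_sorted_equal[of "sorted_list_of_set S" xs] strict_sorted_list_of_set[of S] by simp
qed

lemma sorted_in_Lset: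
  assumes "finite S" "\<forall>i. Suc i < card S \<longrightarrow> Suc i \<notin> T"
  shows "sorted_list_of_set S \<in> Lset S T"
proof -
  have s: "sorted_wrt (<) (sorted_list_of_set S)" by simp
  show ?thesis unfolding Lset_def using assms
    using s[unfolded sorted_wrt_iff_nth_Suc_transp[OF transp_less_nat]] by auto
qed

lemma finite_Lset: "finite S \<Longrightarrow> finite (Lset S T)"
proof -
  assume f: "finite S"
  have "Lset S T \<subseteq> {xs. set xs \<subseteq> S \<and> length xs = card S}"
    unfolding Lset_def using distinct_card by fastforce
  moreover have "finite {xs. set xs \<subseteq> S \<and> length xs = card S}"
    using finite_lists_length_eq[OF f] by simp
  ultimately show ?thesis by (rule finite_subset)
qed

lemma card_Lset: "finite S \<Longrightarrow> card (Lset S T) = Bet (card S) T"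
proof (induction "card S" arbitrary: S rule: less_induct)
  case less
  define m where "m = card S"
  show ?case
  proof (cases "T \<inter> {1..<m} = {}")
    case True
    have "Lset S T = {sorted_list_of_set S}"
    proof
      show "Lset S T \<subseteq> {sorted_list_of_set S}"
      proof
        fix xs assume xs: "xs \<in> Lset S T"
        then have "length xs = m" unfolding Lset_def m_def using distinct_card by fastforce
        have "\<forall>i. Suc i < length xs \<longrightarrow> Suc i \<notin> T"
        proof (intro allI impI)
          fix i assume "Suc i < length xs"
          then have "Suc i \<in> {1..<m}" using \<open>length xs = m\<close> by auto
          then show "Suc i \<notin> T" using True by blast
        qed
        then show "xs \<in> {sorted_list_of_set S}" using sorted_Lset[OF xs] by auto
      qed
      have "\<forall>i. Suc i < card S \<longrightarrow> Suc i \<notin> T"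
      proof (intro allI impI)
        fix i assume "Suc i < card S"
        then have "Suc i \<in> {1..<m}" using m_def by auto
        then show "Suc i \<notin> T" using True by blast
      qed
      then show "{sorted_list_of_set S} \<subseteq> Lset S T"
        using sorted_in_Lset[OF less.prems] by auto
    qed
    then show ?thesis using True Bet_empty[of T m] m_def by simp
  next
    case False
    define t where "t = Max (T \<inter> {1..<m})"
    have tin: "t \<in> T \<inter> {1..<m}" unfolding t_def using False by (intro Max_in) auto
    have tmax: "\<And>j. j \<in> T \<Longrightarrow> j < m \<Longrightarrow> j \<le> t"
    proof -
      fix j assume "j \<in> T" "j < m"
      then show "j \<le> t"
      proof (cases "j = 0")
        case False with \<open>j \<in> T\<close> \<open>j < m\<close> show ?thesis unfolding t_def by (intro Max_ge) auto
      qed simp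
    qed
    define ZZ where "ZZ = {Z. Z \<subseteq> S \<and> card Z = m - t}"
    define f where "f = (\<lambda>(Z, ys). ys @ sorted_list_of_set (Z::nat set))"
    have eq: "Lset S T = f ` (SIGMA Z:ZZ. Lset (S - Z) T)"
    proof
      show "Lset S T \<subseteq> f ` (SIGMA Z:ZZ. Lset (S - Z) T)"
      proof
        fix xs assume xs: "xs \<in> Lset S T"
        have lx: "length xs = m" using xs unfolding Lset_def m_def using distinct_card by fastforce
        define Z where "Z = set (drop t xs)"
        define ys where "ys = take t xs"
        have dx: "distinct xs" using xs unfolding Lset_def by auto
        have dz: "drop t xs \<in> Lset Z T'" for T' :: "nat set"
        proof -
          have "Suc i < length (drop t xs) \<Longrightarrow> drop t xs ! i < drop t xs ! Suc i" for i
          proof -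
            assume a: "Suc i < length (drop t xs)"
            have "Suc (t + i) < m" using a lx by auto
            then have "Suc (t + i) \<notin> T" using tmax[of "Suc (t+i)"] by fastforce
            then have "xs ! (t+i) < xs ! Suc (t+i)" using xs a unfolding Lset_def by auto
            then show ?thesis using a by auto
          qed
          then show ?thesis unfolding Lset_def Z_def using dx by auto
        qed
        have dsort: "drop t xs = sorted_list_of_set Z"
          by (rule sorted_Lset[OF dz[of "{}"]]) simp
        have "xs = take t xs @ drop t xs" by simp
        then have xs_eq: "xs = f (Z, ys)" unfolding f_def ys_def dsort by simp
        have "card Z = m - t" unfolding Z_def using dx lx by (simp add: distinct_card)
        moreover have "Z \<subseteq> S" unfolding Z_def using xs unfolding Lset_def by (auto dest: in_set_dropD)
        ultimately have "Z \<in> ZZ" unfolding ZZ_def by auto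
        moreover have "ys \<in> Lset (S - Z) T"
        proof -
          have u: "set (take t xs) \<union> set (drop t xs) = S" using xs unfolding Lset_def
            by (metis (mono_tags, lifting) append_take_drop_id mem_Collect_eq set_append)
          have "distinct (take t xs @ drop t xs)" using dx by simp
          then have "set (take t xs) \<inter> set (drop t xs) = {}" by (simp only: distinct_append)
          then have "set ys = S - Z" unfolding ys_def Z_def using u by blast
          moreover have "distinct ys" unfolding ys_def using dx by simp
          moreover have "\<forall>i. Suc i < length ys \<longrightarrow> Suc i \<notin> T \<longrightarrow> ys!i < ys!Suc i"
            using xs unfolding Lset_def ys_def by auto
          ultimately show ?thesis unfolding Lset_def by auto
        qed
        ultimately show "xs \<in> f ` (SIGMA Z:ZZ. Lset (S - Z) T)" using xs_eq by blast
      qed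
    next
      show "f ` (SIGMA Z:ZZ. Lset (S - Z) T) \<subseteq> Lset S T"
      proof clarify
        fix Z ys assume Z: "Z \<in> ZZ" and ys: "ys \<in> Lset (S - Z) T"
        have fZ: "finite Z" using Z less.prems unfolding ZZ_def by (auto intro: finite_subset)
        have cZ: "card Z = m - t" "Z \<subseteq> S" using Z unfolding ZZ_def by auto
        have tm: "t < m" "1 \<le> t" using tin by auto
        have "length ys = card (S - Z)" using ys distinct_card[of ys] unfolding Lset_def by auto
        then have lys: "length ys = t" 
          using card_Diff_subset[OF fZ cZ(2)] cZ m_def tm by simp
        define zs where "zs = sorted_list_of_set Z"
        have zs: "sorted_wrt (<) zs" "set zs = Z" "distinct zs" "length zs = m - t"
          unfolding zs_def using fZ cZ by auto
        have "distinct (ys @ zs)" using ys zs unfolding Lset_def by auto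
        moreover have "set (ys @ zs) = S" using ys zs cZ unfolding Lset_def by auto
        moreover have "(ys @ zs) ! i < (ys @ zs) ! Suc i" if a: "Suc i < length (ys @ zs)" "Suc i \<notin> T" for i
        proof -
          have "Suc i \<noteq> t" using a tin by auto
          then consider "Suc i < t" | "i \<ge> t" by linarith
          then show ?thesis
          proof cases
            case 1 then show ?thesis using ys a lys unfolding Lset_def by (auto simp: nth_append)
          next
            case 2
            have "zs ! (i - t) < zs ! Suc (i - t)"
              using zs(1)[unfolded sorted_wrt_iff_nth_Suc_transp[OF transp_less_nat]] a 2 lys by auto
            then show ?thesis using 2 lys by (auto simp: nth_append Suc_diff_le)
          qed
        qed
        ultimately show "f (Z, ys) \<in> Lset S T" unfolding f_def Lset_def zs_def by auto
      qed
    qed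
    have inj: "inj_on f (SIGMA Z:ZZ. Lset (S - Z) T)"
    proof (rule inj_onI, clarify)
      fix Z ys Z' ys'
      assume a: "Z \<in> ZZ" "ys \<in> Lset (S - Z) T" "Z' \<in> ZZ" "ys' \<in> Lset (S - Z') T" "f (Z, ys) = f (Z', ys')"
      have fZ: "finite Z" "finite Z'" using a less.prems unfolding ZZ_def by (auto intro: finite_subset)
      have "length ys = card (S - Z)" using a(2) distinct_card[of ys] unfolding Lset_def by auto
      also have "\<dots> = card S - (m - t)" using a(1) card_Diff_subset[OF fZ(1)] unfolding ZZ_def by auto
      also have "\<dots> = card (S - Z')" using a(3) card_Diff_subset[OF fZ(2)] unfolding ZZ_def by auto
      also have "\<dots> = length ys'" using a(4) distinct_card[of ys'] unfolding Lset_def by auto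
      finally have l: "length ys = length ys'" .
      then have "ys = ys'" "sorted_list_of_set Z = sorted_list_of_set Z'"
        using a(5) unfolding f_def by auto
      then show "Z = Z' \<and> ys = ys'"
        using fZ by (metis sorted_list_of_set.set_sorted_key_list_of_set)
    qed
    have "card (Lset S T) = (\<Sum>Z\<in>ZZ. card (Lset (S - Z) T))"
      unfolding eq card_image[OF inj]
      by (rule card_SigmaI) (auto simp: ZZ_def less.prems finite_Lset)
    also have "\<dots> = (\<Sum>Z\<in>ZZ. Bet t T)"
    proof (rule sum.cong[OF refl])
      fix Z assume Z: "Z \<in> ZZ"
      have fZ: "finite Z" using Z less.prems unfolding ZZ_def by (auto intro: finite_subset)
      have c: "card (S - Z) = t" using Z card_Diff_subset[OF fZ] tin unfolding ZZ_def m_def by auto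
      have "t < card S" using tin m_def by auto
      then have "card (S - Z) < card S" using c by simp
      moreover have "finite (S - Z)" using less.prems by simp
      ultimately have "card (Lset (S - Z) T) = Bet (card (S - Z)) T" by (rule less(1))
      then show "card (Lset (S - Z) T) = Bet t T" using c by simp
    qed
    also have "\<dots> = card ZZ * Bet t T" by simp
    also have "card ZZ = m choose (m - t)" unfolding ZZ_def using n_subsets[OF less.prems] m_def by simp
    also have "m choose (m - t) = m choose t" using tin binomial_symmetric[of t m] by simp
    also have "(m choose t) * Bet t T = Bet m T" using Bet_step[OF False] t_def by simp
    finally show ?thesis unfolding m_def .
  qed
qed




declare upt_Suc[simp del]

definition permmap :: "nat \<Rightarrow> (nat \<Rightarrow> nat) \<Rightarrow> nat list" where
  "permmap n w = map w [1..<Suc n]"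

lemma permmap_inj: "inj_on (permmap n) {w. w permutes {1..n}}"
proof (rule inj_onI)
  fix w v assume w: "w \<in> {w. w permutes {1..n}}" and v: "v \<in> {w. w permutes {1..n}}"
    and eq: "permmap n w = permmap n v"
  show "w = v"
  proof
    fix x
    show "w x = v x"
    proof (cases "x \<in> {1..n}")
      case True
      then have "x \<in> set [1..<Suc n]" by auto
      then show ?thesis using eq unfolding permmap_def map_eq_conv by blast
    next
      case False
      have "w x = x" using w False by (simp add: permutes_not_in)
      moreover have "v x = x" using v False by (simp add: permutes_not_in)
      ultimately show ?thesis by simp
    qed
  qed
qed

lemma permmap_image:
  "permmap n ` {w. w permutes {1..n} \<and> perm_descents n w \<subseteq> T} = Lset {1..n} T"
proof
  show "permmap n ` {w. w permutes {1..n} \<and> perm_descents n w \<subseteq> T} \<subseteq> Lset {1..n} T"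
  proof clarify
    fix w assume w: "w permutes {1..n}" and D: "perm_descents n w \<subseteq> T"
    have inj: "inj_on w {1..n}" using w permutes_inj_on by blast
    have su: "set [1..<Suc n] = {1..n}" by auto
    have dist: "distinct (permmap n w)" unfolding permmap_def distinct_map su using inj by simp
    have st: "set (permmap n w) = {1..n}" unfolding permmap_def set_map su
      using permutes_image[OF w] .
    have asc: "permmap n w ! i < permmap n w ! Suc i" if a: "Suc i < length (permmap n w)" "Suc i \<notin> T" for i
    proof -
      have l: "Suc i < n" using a unfolding permmap_def by simp
      have e1: "permmap n w ! i = w (Suc i)" unfolding permmap_def using l by (simp add: nth_upt)
      have e2: "permmap n w ! Suc i = w (Suc (Suc i))" unfolding permmap_def using l by (simp add: nth_upt)
      have "Suc i \<notin> perm_descents n w" using D a(2) by blast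
      moreover have "Suc i \<in> {1..<n}" using l by simp
      ultimately have "\<not> w (Suc i) > w (Suc (Suc i))" unfolding perm_descents_def by blast
      moreover have "w (Suc i) \<noteq> w (Suc (Suc i))"
      proof
        assume "w (Suc i) = w (Suc (Suc i))"
        moreover have "Suc i \<in> {1..n}" "Suc (Suc i) \<in> {1..n}" using l by auto
        ultimately have "Suc i = Suc (Suc i)" using inj_onD[OF inj] by blast
        then show False by simp
      qed
      ultimately show ?thesis using e1 e2 by simp
    qed
    show "permmap n w \<in> Lset {1..n} T" unfolding Lset_def using dist st asc by simp
  qed
next
  show "Lset {1..n} T \<subseteq> permmap n ` {w. w permutes {1..n} \<and> perm_descents n w \<subseteq> T}"
  proof
    fix xs assume xs: "xs \<in> Lset {1..n} T"
    have d: "distinct xs" and s: "set xs = {1..n}" using xs unfolding Lset_def by auto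
    have l: "length xs = n" using distinct_card[OF d] s by simp
    define w where "w = (\<lambda>i. if i \<in> {1..n} then xs ! (i - 1) else i)"
    have inj: "inj_on w {1..n}"
    proof (rule inj_onI)
      fix i j assume i: "i \<in> {1..n}" and j: "j \<in> {1..n}" and e: "w i = w j"
      then have "xs ! (i - 1) = xs ! (j - 1)" unfolding w_def by simp
      then have "i - 1 = j - 1" using nth_eq_iff_index_eq[OF d] i j l by auto
      moreover have "1 \<le> i" "1 \<le> j" using i j by auto
      ultimately show "i = j" by linarith
    qed
    have img: "w ` {1..n} = {1..n}"
    proof
      show "w ` {1..n} \<subseteq> {1..n}"
      proof
        fix y assume "y \<in> w ` {1..n}"
        then obtain i where i: "i \<in> {1..n}" "y = w i" by blast
        then have "y = xs ! (i - 1)" unfolding w_def by simp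
        moreover have "i - 1 < length xs" using i l by auto
        ultimately show "y \<in> {1..n}" using s nth_mem by blast
      qed
    next
      show "{1..n} \<subseteq> w ` {1..n}"
      proof
        fix y assume "y \<in> {1..n}"
        then have "y \<in> set xs" using s by simp
        then obtain k where k: "k < length xs" "xs ! k = y" by (auto simp: in_set_conv_nth)
        then have "Suc k \<in> {1..n}" using l by auto
        moreover have "w (Suc k) = y" unfolding w_def using k l by auto
        ultimately show "y \<in> w ` {1..n}" by (metis imageI)
      qed
    qed
    have bw: "bij_betw w {1..n} {1..n}" unfolding bij_betw_def using inj img by blast
    have "w x = x" if "x \<notin> {1..n}" for x unfolding w_def by (rule if_not_P[OF that])
    then have wp: "w permutes {1..n}" using bij_imp_permutes[OF bw] by blast
    have pm: "permmap n w = xs"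
    proof (rule nth_equalityI)
      show "length (permmap n w) = length xs" unfolding permmap_def using l by simp
      fix k assume "k < length (permmap n w)"
      then have k: "k < n" unfolding permmap_def by simp
      then show "permmap n w ! k = xs ! k" unfolding permmap_def w_def by (simp add: nth_upt)
    qed
    have "perm_descents n w \<subseteq> T"
    proof
      fix i assume i: "i \<in> perm_descents n w"
      then have i1: "1 \<le> i" "i < n" and gt: "w i > w (Suc i)" unfolding perm_descents_def by auto
      show "i \<in> T"
      proof (rule ccontr)
        assume nT: "i \<notin> T"
        obtain j where j: "i = Suc j" using i1 by (cases i) auto
        have "xs ! j < xs ! Suc j" using xs nT j i1 l unfolding Lset_def by auto
        moreover have "w i = xs ! j" "w (Suc i) = xs ! Suc j" unfolding w_def using j i1 by auto
        ultimately show False using gt by simp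
      qed
    qed
    then show "xs \<in> permmap n ` {w. w permutes {1..n} \<and> perm_descents n w \<subseteq> T}"
      using wp pm by blast
  qed
qed

lemma card_perm_sub: "card {w. w permutes {1..n} \<and> perm_descents n w \<subseteq> T} = Bet n T"
proof -
  have "inj_on (permmap n) {w. w permutes {1..n} \<and> perm_descents n w \<subseteq> T}"
    by (rule inj_on_subset[OF permmap_inj]) auto
  then have "card (permmap n ` {w. w permutes {1..n} \<and> perm_descents n w \<subseteq> T}) = card {w. w permutes {1..n} \<and> perm_descents n w \<subseteq> T}"
    by (rule card_image)
  then have "card {w. w permutes {1..n} \<and> perm_descents n w \<subseteq> T} = card (Lset {1..n} T)"
    unfolding permmap_image by simp
  also have "\<dots> = Bet n T" using card_Lset[of "{1..n}" T] by simp
  finally show ?thesis .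
qed

declare upt_Suc[simp]




definition rib :: "nat \<Rightarrow> nat set \<Rightarrow> nat" where
  "rib n D = card {w. w permutes {1..n} \<and> perm_descents n w = D}"

lemma Bet_as_sum: "finite S \<Longrightarrow> int (Bet n S) = (\<Sum>U\<in>Pow S. int (rib n U))"
proof -
  assume fS: "finite S"
  have fin: "finite {w. w permutes {1..n} \<and> perm_descents n w = U}" for U
    by (rule finite_subset[OF _ finite_permutations[of "{1..n}"]]) auto
  have eq: "{w. w permutes {1..n} \<and> perm_descents n w \<subseteq> S} =
        (\<Union>U\<in>Pow S. {w. w permutes {1..n} \<and> perm_descents n w = U})" by auto
  have "Bet n S = card (\<Union>U\<in>Pow S. {w. w permutes {1..n} \<and> perm_descents n w = U})"
    using card_perm_sub[of n S] unfolding eq by simp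
  also have "\<dots> = (\<Sum>U\<in>Pow S. card {w. w permutes {1..n} \<and> perm_descents n w = U})"
    by (rule card_UN_disjoint) (use fS fin in auto)
  finally show ?thesis unfolding rib_def by simp
qed

lemma rib_mobius: "finite D \<Longrightarrow>
  int (rib n D) = (\<Sum>T\<in>Pow D. (-1) ^ (card D - card T) * int (Bet n T))"
  by (rule inclusion_exclusion_mobius[where f = "\<lambda>U. int (rib n U)" and g = "\<lambda>T. int (Bet n T)"])
     (auto simp: Bet_as_sum)

definition Ssum :: "nat \<Rightarrow> nat set \<Rightarrow> int" where
  "Ssum m D = (\<Sum>T\<in>Pow (D \<inter> {1..<m}). (-1) ^ card T * int (Bet m T))"

lemma rib_Ssum:
  assumes "D \<subseteq> {1..<n}"
  shows "(-1) ^ card D * int (rib n D) = Ssum n D"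
proof -
  have fD: "finite D" using assms finite_subset by blast
  have DD: "D \<inter> {1..<n} = D" using assms by blast
  have "(-1) ^ card D * int (rib n D) = (\<Sum>T\<in>Pow D. (-1) ^ card D * ((-1) ^ (card D - card T) * int (Bet n T)))"
    unfolding rib_mobius[OF fD] sum_distrib_left ..
  also have "\<dots> = (\<Sum>T\<in>Pow D. (-1) ^ card T * int (Bet n T))"
  proof (rule sum.cong[OF refl])
    fix T assume "T \<in> Pow D"
    then have "card T \<le> card D" using fD by (simp add: card_mono)
    then have "(-1::int) ^ (card D - card T) = (-1) ^ (card D + card T)"
      by (simp add: neg_one_power_add_eq_neg_one_power_diff)
    then have "(-1::int) ^ card D * (-1) ^ (card D - card T) = (-1) ^ (card D + card D + card T)"
      by (simp add: power_add)
    also have "\<dots> = (-1) ^ card T" by (simp add: power_add flip: mult_2)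
    finally show "(-1) ^ card D * ((-1) ^ (card D - card T) * int (Bet n T)) = (-1) ^ card T * int (Bet n T)"
      by (simp add: mult.assoc[symmetric])
  qed
  finally show ?thesis unfolding Ssum_def DD .
qed

lemma Ssum_rec: "Ssum m D = 1 - (\<Sum>t\<in>D \<inter> {1..<m}. int (m choose t) * Ssum t D)"
proof -
  define A where "A = D \<inter> {1..<m}"
  have fA: "finite A" unfolding A_def by simp
  define F where "F = (\<lambda>T. (-1::int) ^ card T * int (Bet m T))"
  have "Ssum m D = F {} + sum F (Pow A - {{}})"
    unfolding Ssum_def A_def[symmetric] F_def[symmetric]
    by (rule sum.remove) (auto simp: fA)
  also have "F {} = 1" unfolding F_def by (simp add: Bet_empty)
  also have "Pow A - {{}} = (\<lambda>(t, T'). insert t T') ` (SIGMA t:A. Pow (D \<inter> {1..<t}))"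
  proof
    show "Pow A - {{}} \<subseteq> (\<lambda>(t, T'). insert t T') ` (SIGMA t:A. Pow (D \<inter> {1..<t}))"
    proof
      fix T assume T: "T \<in> Pow A - {{}}"
      have fT: "finite T" using T fA finite_subset by blast
      define t where "t = Max T"
      have tT: "t \<in> T" unfolding t_def using T fT by (intro Max_in) auto
      have tA: "t \<in> A" using tT T by blast
      have "T - {t} \<subseteq> D \<inter> {1..<t}"
      proof
        fix x assume x: "x \<in> T - {t}"
        then have "x \<le> t" unfolding t_def using fT by (intro Max_ge) auto
        then have "x < t" using x by auto
        moreover have "x \<in> A" using x T by blast
        ultimately show "x \<in> D \<inter> {1..<t}" unfolding A_def by auto
      qed
      moreover have "T = insert t (T - {t})" using tT by blast
      ultimately show "T \<in> (\<lambda>(t, T'). insert t T') ` (SIGMA t:A. Pow (D \<inter> {1..<t}))"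
        using tA by blast
    qed
    show "(\<lambda>(t, T'). insert t T') ` (SIGMA t:A. Pow (D \<inter> {1..<t})) \<subseteq> Pow A - {{}}"
      unfolding A_def by auto
  qed
  also have "sum F ((\<lambda>(t, T'). insert t T') ` (SIGMA t:A. Pow (D \<inter> {1..<t})))
      = sum (F \<circ> (\<lambda>(t, T'). insert t T')) (SIGMA t:A. Pow (D \<inter> {1..<t}))"
  proof (rule sum.reindex)
    show "inj_on (\<lambda>(t, T'). insert t T') (SIGMA t:A. Pow (D \<inter> {1..<t}))"
    proof (rule inj_onI)
      fix x y assume x: "x \<in> (SIGMA t:A. Pow (D \<inter> {1..<t}))" and y: "y \<in> (SIGMA t:A. Pow (D \<inter> {1..<t}))"
        and exy: "(\<lambda>(t, T'). insert t T') x = (\<lambda>(t, T'). insert t T') y"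
      obtain t T' where xe: "x = (t, T')" by (cases x)
      obtain s U' where ye: "y = (s, U')" by (cases y)
      have a: "t \<in> A" "T' \<in> Pow (D \<inter> {1..<t})" "s \<in> A" "U' \<in> Pow (D \<inter> {1..<s})"
        using x y xe ye by auto
      have e: "insert t T' = insert s U'" using exy xe ye by simp
      have "\<not> t < s"
      proof
        assume "t < s"
        moreover have "s \<in> insert t T'" using e by blast
        ultimately show False using a(2) by auto
      qed
      moreover have "\<not> s < t"
      proof
        assume "s < t"
        moreover have "t \<in> insert s U'" using e by blast
        ultimately show False using a(4) by auto
      qed
      ultimately have ts: "t = s" by simp
      have "t \<notin> T'" "t \<notin> U'" using a ts by auto
      moreover have "insert t T' = insert t U'" using e ts by simp
      ultimately have "T' = U'" using insert_ident by metis
      then show "x = y" using ts xe ye by simp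
    qed
  qed
  also have "\<dots> = (\<Sum>t\<in>A. \<Sum>T'\<in>Pow (D \<inter> {1..<t}). F (insert t T'))"
  proof -
    have "(\<Sum>t\<in>A. \<Sum>T'\<in>Pow (D \<inter> {1..<t}). F (insert t T')) = (\<Sum>(t, T')\<in>(SIGMA t:A. Pow (D \<inter> {1..<t})). F (insert t T'))"
      by (rule sum.Sigma) (auto simp: fA)
    also have "\<dots> = sum (F \<circ> (\<lambda>(t, T'). insert t T')) (SIGMA t:A. Pow (D \<inter> {1..<t}))"
      by (rule sum.cong[OF refl]) auto
    finally show ?thesis by simp
  qed
  also have "\<dots> = (\<Sum>t\<in>A. - (int (m choose t) * Ssum t D))"
  proof (rule sum.cong[OF refl])
    fix t assume tA: "t \<in> A"
    have "(\<Sum>T'\<in>Pow (D \<inter> {1..<t}). F (insert t T'))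
        = (\<Sum>T'\<in>Pow (D \<inter> {1..<t}). - (int (m choose t) * ((-1) ^ card T' * int (Bet t T'))))"
    proof (rule sum.cong[OF refl])
      fix T' assume T': "T' \<in> Pow (D \<inter> {1..<t})"
      have fT': "finite T'" using T' finite_subset by blast
      have tn: "t \<notin> T'" using T' by auto
      have c: "card (insert t T') = Suc (card T')" using fT' tn by simp
      have I: "insert t T' \<inter> {1..<m} = insert t T'" using T' tA unfolding A_def by auto
      have ne: "insert t T' \<inter> {1..<m} \<noteq> {}" unfolding I by simp
      have mx: "Max (insert t T') = t"
      proof (rule Max_eqI)
        show "finite (insert t T')" using fT' by simp
        show "y \<le> t" if "y \<in> insert t T'" for y using that T' by auto
      qed simp
      have "Bet m (insert t T') = (m choose t) * Bet t (insert t T')"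
        using Bet_step[OF ne] unfolding I mx .
      also have "Bet t (insert t T') = Bet t T'"
        by (rule Bet_cong) auto
      finally have "Bet m (insert t T') = (m choose t) * Bet t T'" .
      then show "F (insert t T') = - (int (m choose t) * ((-1) ^ card T' * int (Bet t T')))"
        unfolding F_def using c by simp
    qed
    also have "\<dots> = - (int (m choose t) * Ssum t D)"
      unfolding Ssum_def by (simp add: sum_negf sum_distrib_left)
    finally show "(\<Sum>T'\<in>Pow (D \<inter> {1..<t}). F (insert t T')) = - (int (m choose t) * Ssum t D)" .
  qed
  also have "\<dots> = - (\<Sum>t\<in>A. int (m choose t) * Ssum t D)" by (simp add: sum_negf)
  finally show ?thesis unfolding A_def by simp
qed




lemma prime_dvd_binom_pow:
  fixes p :: nat
  assumes p: "prime p" and i: "0 < i" "i < p ^ k"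
  shows "p dvd (p ^ k choose i)"
proof (rule ccontr)
  assume nd: "\<not> p dvd (p ^ k choose i)"
  have "coprime p (p ^ k choose i)" by (rule prime_imp_coprime[OF p nd])
  then have cop: "coprime (p ^ k) (p ^ k choose i)" by simp
  have "i * (p ^ k choose i) = p ^ k * ((p ^ k - 1) choose (i - 1))"
    using times_binomial_minus1_eq[OF i(1)] .
  then have "p ^ k dvd i * (p ^ k choose i)" by simp
  then have "p ^ k dvd i" using coprime_dvd_mult_left_iff[OF cop] by simp
  then have "p ^ k \<le> i" using i(1) by (simp add: dvd_imp_le)
  then show False using i(2) by simp
qed

lemma binom_pow_add_cong:
  fixes p :: nat
  assumes p: "prime p"
  shows "[(p ^ k + b) choose t = (b choose t) + (if p ^ k \<le> t then b choose (t - p ^ k) else 0)] (mod p)"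
proof -
  define Q where "Q = p ^ k"
  have Q0: "Q \<noteq> 0" unfolding Q_def using p by (simp add: prime_gt_0_nat)
  have "(Q + b) choose t = (\<Sum>j\<le>t. (Q choose j) * (b choose (t - j)))"
    using vandermonde[of Q b t] by simp
  also have "[\<dots> = (\<Sum>j\<le>t. (if j = 0 then b choose t else 0) + (if j = Q then b choose (t - Q) else 0))] (mod p)"
  proof (rule cong_sum)
    fix j assume "j \<in> {..t}"
    consider "j = 0" | "j = Q" | "0 < j" "j < Q" | "Q < j" by linarith
    then show "[(Q choose j) * (b choose (t - j)) = (if j = 0 then b choose t else 0) + (if j = Q then b choose (t - Q) else 0)] (mod p)"
    proof cases
      case 1 then show ?thesis using Q0 by simp
    next
      case 2 then show ?thesis using Q0 by simp
    next
      case 3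
      have "p dvd (Q choose j)" unfolding Q_def using prime_dvd_binom_pow[OF p 3[unfolded Q_def]] .
      then have "[(Q choose j) * (b choose (t - j)) = 0] (mod p)" by (simp add: cong_0_iff)
      then show ?thesis using 3 by simp
    next
      case 4 then show ?thesis by (simp add: binomial_eq_0)
    qed
  qed
  also have "(\<Sum>j\<le>t. (if j = 0 then b choose t else 0) + (if j = Q then b choose (t - Q) else 0))
      = (b choose t) + (if Q \<le> t then b choose (t - Q) else 0)"
    by (simp add: sum.distrib sum.delta)
  finally show ?thesis unfolding Q_def .
qed

lemma sum_list_if_distrib: "(if c then (\<Sum>x\<leftarrow>ys. f x) else (0::int)) = (\<Sum>x\<leftarrow>ys. if c then f x else 0)"
  by (induction ys) auto

lemma binom_pow_add_list:
  fixes p :: nat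
  assumes p: "prime p"
    and hb: "\<And>s. [int (b choose s) = (\<Sum>x\<leftarrow>ys. of_bool (s = x))] (mod int p)"
  shows "[int ((p ^ k + b) choose t) = (\<Sum>x\<leftarrow>ys @ map (\<lambda>y. p ^ k + y) ys. of_bool (t = x))] (mod int p)"
proof -
  have "[int ((p ^ k + b) choose t) = int (b choose t) + (if p ^ k \<le> t then int (b choose (t - p ^ k)) else 0)] (mod int p)"
    using binom_pow_add_cong[OF p, of k b t] by (cases "p ^ k \<le> t") (simp_all add: cong_int_iff[symmetric] of_nat_add)
  also have "[int (b choose t) + (if p ^ k \<le> t then int (b choose (t - p ^ k)) else 0)
      = (\<Sum>x\<leftarrow>ys. of_bool (t = x)) + (if p ^ k \<le> t then (\<Sum>x\<leftarrow>ys. of_bool (t - p ^ k = x)) else 0)] (mod int p)"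
    by (intro cong_add hb) (simp add: hb)
  also have "(if p ^ k \<le> t then (\<Sum>x\<leftarrow>ys. of_bool (t - p ^ k = x)) else (0::int))
      = (\<Sum>x\<leftarrow>ys. of_bool (t = p ^ k + x))"
    unfolding sum_list_if_distrib by (rule arg_cong[where f = sum_list]) auto
  finally show ?thesis by (simp add: comp_def)
qed

lemma binom_pow_list:
  fixes p :: nat
  assumes p: "prime p"
  shows "[int (p ^ k choose t) = (\<Sum>x\<leftarrow>[0, p ^ k]. of_bool (t = x))] (mod int p)"
proof -
  have "[int ((p ^ k + 0) choose t) = (\<Sum>x\<leftarrow>[0] @ map (\<lambda>y. p ^ k + y) [0]. of_bool (t = x))] (mod int p)"
  proof (rule binom_pow_add_list[OF p])
    fix s show "[int (0 choose s) = (\<Sum>x\<leftarrow>[0]. of_bool (s = x))] (mod int p)" by (cases s) simp_all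
  qed
  then show ?thesis by simp
qed




lemma cong_rhs: "[a = b] (mod m) \<Longrightarrow> b = c \<Longrightarrow> [a = c] (mod m)" by simp

lemma sum_ofbool_list:
  fixes f :: "nat \<Rightarrow> int"
  assumes "finite A"
  shows "(\<Sum>t\<in>A. (\<Sum>x\<leftarrow>xs. of_bool (t = x)) * f t) = (\<Sum>x\<leftarrow>xs. of_bool (x \<in> A) * f x)"
proof (induction xs)
  case Nil then show ?case by simp
next
  case (Cons a xs)
  have "(\<Sum>t\<in>A. (\<Sum>x\<leftarrow>a # xs. of_bool (t = x)) * f t)
      = (\<Sum>t\<in>A. of_bool (t = a) * f t) + (\<Sum>t\<in>A. (\<Sum>x\<leftarrow>xs. of_bool (t = x)) * f t)"
    by (simp add: distrib_right sum.distrib)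
  also have "(\<Sum>t\<in>A. of_bool (t = a) * f t) = (\<Sum>t\<in>A. if t = a then f a else 0)"
    by (rule sum.cong) auto
  also have "\<dots> = of_bool (a \<in> A) * f a" using assms by (simp add: sum.delta)
  finally show ?case using Cons by simp
qed

lemma list_subst_cong:
  fixes f v :: "nat \<Rightarrow> int"
  assumes "\<And>x. x \<in> set xs \<Longrightarrow> x \<in> A \<Longrightarrow> [f x = v x] (mod q)"
  shows "[(\<Sum>x\<leftarrow>xs. of_bool (x \<in> A) * f x) = (\<Sum>x\<leftarrow>xs. of_bool (x \<in> A) * v x)] (mod q)"
  using assms
proof (induction xs)
  case Nil then show ?case by simp
next
  case (Cons a xs)
  have "[of_bool (a \<in> A) * f a = of_bool (a \<in> A) * v a] (mod q)"
  proof (cases "a \<in> A")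
    case True then show ?thesis using Cons.prems[of a] by simp
  qed simp
  moreover have "[(\<Sum>x\<leftarrow>xs. of_bool (x \<in> A) * f x) = (\<Sum>x\<leftarrow>xs. of_bool (x \<in> A) * v x)] (mod q)"
    using Cons by simp
  ultimately show ?case by (simp add: cong_add)
qed

lemma Ssum_cong:
  assumes hm: "\<And>t. [int (m choose t) = (\<Sum>x\<leftarrow>xs. of_bool (t = x))] (mod q)"
    and hv: "\<And>x. x \<in> set xs \<Longrightarrow> x \<in> D \<inter> {1..<m} \<Longrightarrow> [Ssum x D = v x] (mod q)"
  shows "[Ssum m D = 1 - (\<Sum>x\<leftarrow>xs. of_bool (x \<in> D \<inter> {1..<m}) * v x)] (mod q)"
proof -
  have "[(\<Sum>t\<in>D \<inter> {1..<m}. int (m choose t) * Ssum t D) = (\<Sum>t\<in>D \<inter> {1..<m}. (\<Sum>x\<leftarrow>xs. of_bool (t = x)) * Ssum t D)] (mod q)"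
    by (rule cong_sum) (rule cong_mult[OF hm cong_refl])
  also have "(\<Sum>t\<in>D \<inter> {1..<m}. (\<Sum>x\<leftarrow>xs. of_bool (t = x)) * Ssum t D) = (\<Sum>x\<leftarrow>xs. of_bool (x \<in> D \<inter> {1..<m}) * Ssum x D)"
    by (rule sum_ofbool_list) simp
  also have "[\<dots> = (\<Sum>x\<leftarrow>xs. of_bool (x \<in> D \<inter> {1..<m}) * v x)] (mod q)"
    by (rule list_subst_cong) (rule hv)
  finally have "[1 - (\<Sum>t\<in>D \<inter> {1..<m}. int (m choose t) * Ssum t D) = 1 - (\<Sum>x\<leftarrow>xs. of_bool (x \<in> D \<inter> {1..<m}) * v x)] (mod q)"
    by (rule cong_diff[OF cong_refl])
  then show ?thesis by (subst Ssum_rec)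
qed

lemma Ssum_pow:
  fixes p :: nat
  assumes p: "prime p"
  shows "[Ssum (p ^ k) D = 1] (mod int p)"
proof -
  have "[Ssum (p ^ k) D = 1 - (\<Sum>x\<leftarrow>[0, p ^ k]. of_bool (x \<in> D \<inter> {1..<p ^ k}) * 1)] (mod int p)"
    by (rule Ssum_cong[OF binom_pow_list[OF p]]) auto
  then show ?thesis by simp
qed

lemma Ssum_2P:
  fixes p :: nat
  assumes p: "prime p"
  shows "[Ssum (p ^ d + p ^ d) D = 1 - 2 * of_bool (p ^ d \<in> D)] (mod int p)"
proof -
  have p0: "0 < p" using p by (simp add: prime_gt_0_nat)
  have P1: "1 \<le> p ^ d" using p by (simp add: prime_gt_0_nat Suc_leI)
  have hm: "\<And>t. [int ((p ^ d + p ^ d) choose t) = (\<Sum>x\<leftarrow>[0, p ^ d] @ map (\<lambda>y. p ^ d + y) [0, p ^ d]. of_bool (t = x))] (mod int p)"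
    by (rule binom_pow_add_list[OF p binom_pow_list[OF p]])
  have "[Ssum (p ^ d + p ^ d) D = 1 - (\<Sum>x\<leftarrow>[0, p ^ d] @ map (\<lambda>y. p ^ d + y) [0, p ^ d]. of_bool (x \<in> D \<inter> {1..<p ^ d + p ^ d}) * 1)] (mod int p)"
  proof (rule Ssum_cong[OF hm])
    fix x assume "x \<in> set ([0, p ^ d] @ map (\<lambda>y. p ^ d + y) [0, p ^ d])" "x \<in> D \<inter> {1..<p ^ d + p ^ d}"
    then have "x = p ^ d" by auto
    then show "[Ssum x D = 1] (mod int p)" using Ssum_pow[OF p] by simp
  qed
  moreover have "1 - (\<Sum>x\<leftarrow>[0, p ^ d] @ map (\<lambda>y. p ^ d + y) [0, p ^ d]. of_bool (x \<in> D \<inter> {1..<p ^ d + p ^ d}) * (1::int))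
     = 1 - 2 * of_bool (p ^ d \<in> D)" using P1 p0 by simp
  ultimately show ?thesis by (rule cong_rhs)
qed

lemma Ssum_PQ:
  fixes p :: nat
  assumes p: "prime p"
  shows "[Ssum (p ^ d + p ^ e) D = 1 - of_bool (p ^ d \<in> D) - of_bool (p ^ e \<in> D)] (mod int p)"
proof -
  have p0: "0 < p" using p by (simp add: prime_gt_0_nat)
  have P1: "1 \<le> p ^ d" "1 \<le> p ^ e" using p by (simp_all add: prime_gt_0_nat Suc_leI)
  have hm: "\<And>t. [int ((p ^ d + p ^ e) choose t) = (\<Sum>x\<leftarrow>[0, p ^ e] @ map (\<lambda>y. p ^ d + y) [0, p ^ e]. of_bool (t = x))] (mod int p)"
    by (rule binom_pow_add_list[OF p binom_pow_list[OF p]])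
  have "[Ssum (p ^ d + p ^ e) D = 1 - (\<Sum>x\<leftarrow>[0, p ^ e] @ map (\<lambda>y. p ^ d + y) [0, p ^ e]. of_bool (x \<in> D \<inter> {1..<p ^ d + p ^ e}) * 1)] (mod int p)"
  proof (rule Ssum_cong[OF hm])
    fix x assume "x \<in> set ([0, p ^ e] @ map (\<lambda>y. p ^ d + y) [0, p ^ e])" "x \<in> D \<inter> {1..<p ^ d + p ^ e}"
    then have "x = p ^ d \<or> x = p ^ e" by auto
    then show "[Ssum x D = 1] (mod int p)" using Ssum_pow[OF p] by auto
  qed
  moreover have "1 - (\<Sum>x\<leftarrow>[0, p ^ e] @ map (\<lambda>y. p ^ d + y) [0, p ^ e]. of_bool (x \<in> D \<inter> {1..<p ^ d + p ^ e}) * (1::int))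
     = 1 - of_bool (p ^ d \<in> D) - of_bool (p ^ e \<in> D)" using P1 p0 by simp
  ultimately show ?thesis by (rule cong_rhs)
qed

definition Gv :: "nat \<Rightarrow> nat \<Rightarrow> nat set \<Rightarrow> int" where
  "Gv P Q D = 1 - (of_bool (Q \<in> D) + of_bool (P \<in> D) + of_bool (P + Q \<in> D) * (1 - of_bool (P \<in> D) - of_bool (Q \<in> D))
      + of_bool (P \<in> D) + of_bool (P + Q \<in> D) * (1 - of_bool (P \<in> D) - of_bool (Q \<in> D))
      + of_bool (P + P \<in> D) * (1 - 2 * of_bool (P \<in> D)))"

lemma Ssum_n:
  fixes p :: nat
  assumes p: "prime p" and oddp: "odd p"
  shows "[Ssum (p ^ d + (p ^ d + p ^ e)) D = Gv (p ^ d) (p ^ e) D] (mod int p)"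
proof -
  define P where "P = p ^ d"
  define Q where "Q = p ^ e"
  have P1: "1 \<le> P" "1 \<le> Q" using p unfolding P_def Q_def by (simp_all add: prime_gt_0_nat Suc_leI)
  have oQ: "odd Q" unfolding Q_def using oddp by simp
  have QPP: "Q \<noteq> P + P" using oQ by auto
  define v where "v = (\<lambda>x. if x = P + Q then 1 - of_bool (P \<in> D) - of_bool (Q \<in> D)
                          else if x = P + P then 1 - 2 * of_bool (P \<in> D) else (1::int))"
  define xs where "xs = ([0, Q] @ map (\<lambda>y. P + y) [0, Q]) @ map (\<lambda>y. P + y) ([0, Q] @ map (\<lambda>y. P + y) [0, Q])"
  have hm: "\<And>t. [int ((P + (P + Q)) choose t) = (\<Sum>x\<leftarrow>xs. of_bool (t = x))] (mod int p)"
    unfolding xs_def P_def Q_def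
    by (rule binom_pow_add_list[OF p binom_pow_add_list[OF p binom_pow_list[OF p]]])
  have "[Ssum (P + (P + Q)) D = 1 - (\<Sum>x\<leftarrow>xs. of_bool (x \<in> D \<inter> {1..<P + (P + Q)}) * v x)] (mod int p)"
  proof (rule Ssum_cong[OF hm])
    fix x assume x: "x \<in> set xs" "x \<in> D \<inter> {1..<P + (P + Q)}"
    then have "x = P \<or> x = Q \<or> x = P + Q \<or> x = P + P" unfolding xs_def by auto
    then show "[Ssum x D = v x] (mod int p)"
    proof (elim disjE)
      assume x: "x = P"
      have "v P = 1" unfolding v_def using P1 by simp
      then show ?thesis using Ssum_pow[OF p, of d D] x unfolding P_def by simp
    next
      assume x: "x = Q"
      have "v Q = 1" unfolding v_def using P1 QPP by simp
      then show ?thesis using Ssum_pow[OF p, of e D] x unfolding Q_def by simp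
    next
      assume x: "x = P + Q"
      have "v (P + Q) = 1 - of_bool (P \<in> D) - of_bool (Q \<in> D)" unfolding v_def by simp
      then show ?thesis using Ssum_PQ[OF p, of d e D] x unfolding P_def Q_def by simp
    next
      assume x: "x = P + P"
      have "v (P + P) = 1 - 2 * of_bool (P \<in> D)" unfolding v_def using P1 by simp
      then show ?thesis using Ssum_2P[OF p, of d D] x unfolding P_def by simp
    qed
  qed
  moreover have "1 - (\<Sum>x\<leftarrow>xs. of_bool (x \<in> D \<inter> {1..<P + (P + Q)}) * v x) = Gv P Q D"
    unfolding xs_def Gv_def v_def using P1 QPP by (simp add: algebra_simps)
  ultimately show ?thesis unfolding P_def Q_def by (rule cong_rhs)
qed




lemma cd_single: "comp_descents [a] = {}"
  unfolding comp_descents_def by auto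

lemma cd_cons:
  assumes "xs \<noteq> []"
  shows "comp_descents (a # xs) = insert a ((+) a ` comp_descents xs)"
proof
  show "comp_descents (a # xs) \<subseteq> insert a ((+) a ` comp_descents xs)"
  proof
    fix s assume "s \<in> comp_descents (a # xs)"
    then obtain k where k: "s = sum_list (take k (a # xs))" "1 \<le> k" "k < length (a # xs)"
      unfolding comp_descents_def by blast
    show "s \<in> insert a ((+) a ` comp_descents xs)"
    proof (cases "k = 1")
      case True then show ?thesis using k by simp
    next
      case False
      then obtain j where j: "k = Suc j" "1 \<le> j" using k by (cases k) auto
      then have "s = a + sum_list (take j xs)" using k by simp
      moreover have "sum_list (take j xs) \<in> comp_descents xs"
        unfolding comp_descents_def using j k by auto
      ultimately show ?thesis by blast
    qed
  qed
next
  show "insert a ((+) a ` comp_descents xs) \<subseteq> comp_descents (a # xs)"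
  proof
    fix s assume s: "s \<in> insert a ((+) a ` comp_descents xs)"
    show "s \<in> comp_descents (a # xs)"
    proof (cases "s = a")
      case True
      have "a = sum_list (take 1 (a # xs))" by simp
      moreover have "1 < length (a # xs)" using assms by simp
      ultimately show ?thesis unfolding comp_descents_def using True by blast
    next
      case False
      then obtain j where j: "s = a + sum_list (take j xs)" "1 \<le> j" "j < length xs"
        using s unfolding comp_descents_def by blast
      then have "s = sum_list (take (Suc j) (a # xs))" by simp
      moreover have "1 \<le> Suc j" "Suc j < length (a # xs)" using j by auto
      ultimately show ?thesis unfolding comp_descents_def by blast
    qed
  qed
qed

lemma sum_list_pos: "xs \<noteq> [] \<Longrightarrow> \<forall>a\<in>set xs. 0 < a \<Longrightarrow> 1 \<le> sum_list (xs :: nat list)"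
proof -
  assume "xs \<noteq> []" "\<forall>a\<in>set xs. 0 < a"
  then obtain x where "x \<in> set xs" "0 < x" by (cases xs) auto
  then have "x \<le> sum_list xs" using member_le_sum_list by blast
  then show ?thesis using \<open>0 < x\<close> by simp
qed

lemma cd_range:
  assumes "\<alpha> \<in> compositions n"
  shows "comp_descents \<alpha> \<subseteq> {1..<n}"
proof
  fix s assume "s \<in> comp_descents \<alpha>"
  then obtain k where k: "s = sum_list (take k \<alpha>)" "1 \<le> k" "k < length \<alpha>"
    unfolding comp_descents_def by blast
  have pos: "\<forall>a\<in>set \<alpha>. 0 < a" and sn: "sum_list \<alpha> = n" using assms unfolding compositions_def by auto
  have "take k \<alpha> \<noteq> []" using k by (cases \<alpha>) auto
  moreover have "\<forall>a\<in>set (take k \<alpha>). 0 < a" using pos by (auto dest: in_set_takeD)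
  ultimately have s1: "1 \<le> s" using k sum_list_pos by simp
  have "drop k \<alpha> \<noteq> []" using k by simp
  moreover have "\<forall>a\<in>set (drop k \<alpha>). 0 < a" using pos by (auto dest: in_set_dropD)
  ultimately have d1: "1 \<le> sum_list (drop k \<alpha>)" using sum_list_pos by simp
  have "sum_list (take k \<alpha>) + sum_list (drop k \<alpha>) = n"
    using sn sum_list_append[of "take k \<alpha>" "drop k \<alpha>"] by simp
  then show "s \<in> {1..<n}" using s1 d1 k by simp
qed

lemma cd_ge1:
  assumes "x \<in> comp_descents \<alpha>" "\<alpha> \<in> compositions n"
  shows "1 \<le> x"
proof -
  have "x \<in> {1..<n}" using cd_range[OF assms(2)] assms(1) by blast
  then show ?thesis by simp
qed

lemma compositions_0:
  assumes "\<beta> \<in> compositions 0"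
  shows "\<beta> = []"
proof (rule ccontr)
  assume "\<beta> \<noteq> []"
  moreover have "\<forall>a\<in>set \<beta>. 0 < a" using assms unfolding compositions_def by simp
  ultimately have "1 \<le> sum_list \<beta>" by (rule sum_list_pos)
  moreover have "sum_list \<beta> = 0" using assms unfolding compositions_def by simp
  ultimately show False by simp
qed

lemma cd_inj: "\<alpha> \<in> compositions n \<Longrightarrow> \<beta> \<in> compositions n \<Longrightarrow> comp_descents \<alpha> = comp_descents \<beta> \<Longrightarrow> \<alpha> = \<beta>"
proof (induction \<alpha> arbitrary: n \<beta>)
  case Nil
  then have "n = 0" unfolding compositions_def by simp
  then have "\<beta> = []" using Nil.prems(2) compositions_0 by blast
  then show ?case by simp
next
  case (Cons a \<alpha>')
  have apos: "0 < a" and a'pos: "\<forall>x\<in>set \<alpha>'. 0 < x" and sa: "a + sum_list \<alpha>' = n"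
    using Cons.prems(1) unfolding compositions_def by auto
  have "\<beta> \<noteq> []" using Cons.prems(2) apos sa unfolding compositions_def by auto
  then obtain b \<beta>' where be: "\<beta> = b # \<beta>'" by (cases \<beta>) auto
  have bpos: "0 < b" and b'pos: "\<forall>x\<in>set \<beta>'. 0 < x" and sb: "b + sum_list \<beta>' = n"
    using Cons.prems(2) unfolding be compositions_def by auto
  have ca': "\<alpha>' \<in> compositions (n - a)" using a'pos sa unfolding compositions_def by auto
  have cb': "\<beta>' \<in> compositions (n - b)" using b'pos sb unfolding compositions_def by auto
  show ?case
  proof (cases "\<alpha>' = []")
    case True
    show ?thesis
    proof (cases "\<beta>' = []")
      case True
      then show ?thesis using \<open>\<alpha>' = []\<close> sa sb be by simp
    next
      case False
      have "b \<in> comp_descents \<beta>" unfolding be cd_cons[OF False] by simp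
      then show ?thesis using Cons.prems(3) True cd_single by simp
    qed
  next
    case False
    show ?thesis
    proof (cases "\<beta>' = []")
      case True
      have "a \<in> comp_descents (a # \<alpha>')" unfolding cd_cons[OF False] by simp
      then show ?thesis using Cons.prems(3) True be cd_single by simp
    next
      case b'ne: False
      have cda: "comp_descents (a # \<alpha>') = insert a ((+) a ` comp_descents \<alpha>')" by (rule cd_cons[OF False])
      have cdb: "comp_descents \<beta> = insert b ((+) b ` comp_descents \<beta>')" unfolding be by (rule cd_cons[OF b'ne])
      have "a \<in> comp_descents (a # \<alpha>')" unfolding cda by simp
      then have "a \<in> comp_descents \<beta>" using Cons.prems(3) by simp
      then have ab: "b \<le> a" unfolding cdb by auto
      have "b \<in> comp_descents \<beta>" unfolding cdb by simp
      then have "b \<in> comp_descents (a # \<alpha>')" using Cons.prems(3) by simp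
      then have ba: "a \<le> b" unfolding cda by auto
      have abe: "a = b" using ab ba by simp
      have na: "a \<notin> (+) a ` comp_descents \<alpha>'" using cd_ge1[OF _ ca'] by fastforce
      have nb: "a \<notin> (+) a ` comp_descents \<beta>'" using cd_ge1[OF _ cb'] abe by fastforce
      have "insert a ((+) a ` comp_descents \<alpha>') = insert a ((+) a ` comp_descents \<beta>')"
        using Cons.prems(3) cda cdb abe by simp
      then have "(+) a ` comp_descents \<alpha>' = (+) a ` comp_descents \<beta>'"
        using na nb insert_ident by metis
      moreover have "inj ((+) a)" by (simp add: inj_def)
      ultimately have "comp_descents \<alpha>' = comp_descents \<beta>'"
        using inj_image_eq_iff by blast
      then have "\<alpha>' = \<beta>'" using Cons.IH[OF ca'] cb' abe by simp
      then show ?thesis using be abe by simp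
    qed
  qed
qed

lemma cd_surj: "1 \<le> n \<Longrightarrow> D \<subseteq> {1..<n} \<Longrightarrow> \<exists>\<alpha>\<in>compositions n. comp_descents \<alpha> = D"
proof (induction n arbitrary: D rule: less_induct)
  case (less n)
  show ?case
  proof (cases "D = {}")
    case True
    have "[n] \<in> compositions n" using less.prems unfolding compositions_def by auto
    then show ?thesis using True cd_single by blast
  next
    case False
    have fD: "finite D" using less.prems(2) finite_subset by blast
    define m where "m = Min D"
    have mD: "m \<in> D" unfolding m_def using fD False by (rule Min_in)
    have mmin: "\<And>x. x \<in> D \<Longrightarrow> m \<le> x" unfolding m_def using fD by simp
    have m1: "1 \<le> m" "m < n" using mD less.prems(2) by auto
    define D' where "D' = (\<lambda>x. x - m) ` (D - {m})"
    have D'sub: "D' \<subseteq> {1..<n - m}"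
    proof
      fix y assume "y \<in> D'"
      then obtain x where x: "x \<in> D" "x \<noteq> m" "y = x - m" unfolding D'_def by blast
      have "m < x" using mmin[OF x(1)] x(2) by simp
      moreover have "x < n" using x(1) less.prems(2) by auto
      ultimately show "y \<in> {1..<n - m}" using x(3) by auto
    qed
    have "n - m < n" "1 \<le> n - m" using m1 by auto
    then obtain \<alpha>' where a': "\<alpha>' \<in> compositions (n - m)" "comp_descents \<alpha>' = D'"
      using less.IH D'sub by blast
    have ne: "\<alpha>' \<noteq> []" using a'(1) \<open>1 \<le> n - m\<close> unfolding compositions_def by auto
    have "m # \<alpha>' \<in> compositions n" using a'(1) m1 unfolding compositions_def by auto
    moreover have "comp_descents (m # \<alpha>') = D"
    proof -
      have "(+) m ` D' = D - {m}"
      proof -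
        have "(+) m ` D' = (\<lambda>x. m + (x - m)) ` (D - {m})" unfolding D'_def image_image ..
        also have "\<dots> = (\<lambda>x. x) ` (D - {m})"
        proof (rule image_cong[OF refl])
          fix x assume "x \<in> D - {m}"
          then have "m \<le> x" using mmin by blast
          then show "m + (x - m) = x" by simp
        qed
        finally show ?thesis by simp
      qed
      then show ?thesis unfolding cd_cons[OF ne] a'(2) using mD by blast
    qed
    ultimately show ?thesis by blast
  qed
qed

lemma comp_count:
  assumes n1: "1 \<le> n"
  shows "card {\<alpha> \<in> compositions n. P (comp_descents \<alpha>)} = card {D \<in> Pow {1..<n}. P D}"
proof -
  have inj: "inj_on comp_descents {\<alpha> \<in> compositions n. P (comp_descents \<alpha>)}"
  proof (rule inj_onI)
    fix a b assume "a \<in> {\<alpha> \<in> compositions n. P (comp_descents \<alpha>)}" "b \<in> {\<alpha> \<in> compositions n. P (comp_descents \<alpha>)}"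
      "comp_descents a = comp_descents b"
    then show "a = b" using cd_inj[of a n b] by blast
  qed
  have "comp_descents ` {\<alpha> \<in> compositions n. P (comp_descents \<alpha>)} = {D \<in> Pow {1..<n}. P D}"
  proof
    show "comp_descents ` {\<alpha> \<in> compositions n. P (comp_descents \<alpha>)} \<subseteq> {D \<in> Pow {1..<n}. P D}"
      using cd_range by blast
    show "{D \<in> Pow {1..<n}. P D} \<subseteq> comp_descents ` {\<alpha> \<in> compositions n. P (comp_descents \<alpha>)}"
    proof
      fix D assume D: "D \<in> {D \<in> Pow {1..<n}. P D}"
      then obtain \<alpha> where "\<alpha> \<in> compositions n" "comp_descents \<alpha> = D" using cd_surj[OF n1] by blast
      then show "D \<in> comp_descents ` {\<alpha> \<in> compositions n. P (comp_descents \<alpha>)}" using D by blast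
    qed
  qed
  then show ?thesis using card_image[OF inj] by simp
qed

lemma ribbon_rib: "\<alpha> \<in> compositions n \<Longrightarrow> ribbon \<alpha> = rib n (comp_descents \<alpha>)"
  unfolding ribbon_def rib_def compositions_def by simp




lemma pow_split:
  assumes fX: "finite X" and fY: "finite Y" and dj: "X \<inter> Y = {}"
  shows "card {D \<in> Pow (X \<union> Y). Rl D} = (\<Sum>E\<in>Pow X. card {R \<in> Pow Y. Rl (E \<union> R)})"
proof -
  have eq: "{D \<in> Pow (X \<union> Y). Rl D} = (\<Union>E\<in>Pow X. (\<lambda>R. E \<union> R) ` {R \<in> Pow Y. Rl (E \<union> R)})"
  proof
    show "{D \<in> Pow (X \<union> Y). Rl D} \<subseteq> (\<Union>E\<in>Pow X. (\<lambda>R. E \<union> R) ` {R \<in> Pow Y. Rl (E \<union> R)})"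
    proof
      fix D assume D: "D \<in> {D \<in> Pow (X \<union> Y). Rl D}"
      have "D = (D \<inter> X) \<union> (D \<inter> Y)" using D by blast
      moreover have "D \<inter> X \<in> Pow X" "D \<inter> Y \<in> Pow Y" by auto
      moreover have "Rl ((D \<inter> X) \<union> (D \<inter> Y))" using D calculation(1) by simp
      ultimately show "D \<in> (\<Union>E\<in>Pow X. (\<lambda>R. E \<union> R) ` {R \<in> Pow Y. Rl (E \<union> R)})" by blast
    qed
    show "(\<Union>E\<in>Pow X. (\<lambda>R. E \<union> R) ` {R \<in> Pow Y. Rl (E \<union> R)}) \<subseteq> {D \<in> Pow (X \<union> Y). Rl D}"
      by auto
  qed
  have inj: "inj_on (\<lambda>R. E \<union> R) {R \<in> Pow Y. Rl (E \<union> R)}" if "E \<in> Pow X" for E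
  proof (rule inj_onI)
    fix R R' assume "R \<in> {R \<in> Pow Y. Rl (E \<union> R)}" "R' \<in> {R \<in> Pow Y. Rl (E \<union> R)}" "E \<union> R = E \<union> R'"
    moreover have "R = (E \<union> R) \<inter> Y" "R' = (E \<union> R') \<inter> Y" using calculation that dj by auto
    ultimately show "R = R'" by simp
  qed
  have "card {D \<in> Pow (X \<union> Y). Rl D} = (\<Sum>E\<in>Pow X. card ((\<lambda>R. E \<union> R) ` {R \<in> Pow Y. Rl (E \<union> R)}))"
    unfolding eq
  proof (rule card_UN_disjoint)
    show "finite (Pow X)" using fX by simp
    show "\<forall>E\<in>Pow X. finite ((\<lambda>R. E \<union> R) ` {R \<in> Pow Y. Rl (E \<union> R)})" using fY by auto
    show "\<forall>E\<in>Pow X. \<forall>E'\<in>Pow X. E \<noteq> E' \<longrightarrow> (\<lambda>R. E \<union> R) ` {R \<in> Pow Y. Rl (E \<union> R)} \<inter> (\<lambda>R. E' \<union> R) ` {R \<in> Pow Y. Rl (E' \<union> R)} = {}"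
    proof (intro ballI impI)
      fix E E' assume E: "E \<in> Pow X" "E' \<in> Pow X" "E \<noteq> E'"
      show "(\<lambda>R. E \<union> R) ` {R \<in> Pow Y. Rl (E \<union> R)} \<inter> (\<lambda>R. E' \<union> R) ` {R \<in> Pow Y. Rl (E' \<union> R)} = {}"
      proof (rule ccontr)
        assume "(\<lambda>R. E \<union> R) ` {R \<in> Pow Y. Rl (E \<union> R)} \<inter> (\<lambda>R. E' \<union> R) ` {R \<in> Pow Y. Rl (E' \<union> R)} \<noteq> {}"
        then obtain R R' where RR: "R \<subseteq> Y" "R' \<subseteq> Y" "E \<union> R = E' \<union> R'" by blast
        have "E = (E \<union> R) \<inter> X" using RR(1) E(1) dj by blast
        also have "\<dots> = (E' \<union> R') \<inter> X" using RR(3) by simp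
        also have "\<dots> = E'" using RR(2) E(2) dj by blast
        finally show False using E(3) by simp
      qed
    qed
  qed
  also have "\<dots> = (\<Sum>E\<in>Pow X. card {R \<in> Pow Y. Rl (E \<union> R)})"
    by (rule sum.cong[OF refl]) (rule card_image[OF inj])
  finally show ?thesis .
qed

lemma sum_pow_insert:
  assumes "finite A" "x \<notin> A"
  shows "(\<Sum>E\<in>Pow (insert x A). f E) = (\<Sum>E\<in>Pow A. f E) + (\<Sum>E\<in>Pow A. f (insert x E))"
proof -
  have inj: "inj_on (insert x) (Pow A)" using assms(2) by (auto simp: inj_on_def)
  have dj: "Pow A \<inter> insert x ` Pow A = {}" using assms(2) by auto
  have "(\<Sum>E\<in>Pow (insert x A). f E) = (\<Sum>E\<in>Pow A \<union> insert x ` Pow A. f E)"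
    by (simp add: Pow_insert)
  also have "\<dots> = (\<Sum>E\<in>Pow A. f E) + (\<Sum>E\<in>insert x ` Pow A. f E)"
    by (rule sum.union_disjoint) (use assms dj in auto)
  also have "(\<Sum>E\<in>insert x ` Pow A. f E) = (\<Sum>E\<in>Pow A. f (insert x E))"
    using sum.reindex[OF inj, of f] by simp
  finally show ?thesis .
qed

lemma even_subsets:
  assumes "finite Y" "Y \<noteq> {}"
  shows "card {R \<in> Pow Y. even (card R)} = 2 ^ (card Y - 1)"
    and "card {R \<in> Pow Y. odd (card R)} = 2 ^ (card Y - 1)"
proof -
  have eo: "card {T. T \<subseteq> Y \<and> {} \<subseteq> T \<and> even (card T)} = card {T. T \<subseteq> Y \<and> {} \<subseteq> T \<and> odd (card T)}"
    using card_subsupersets_even_odd[of Y "{}"] assms by auto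
  have e1: "{R \<in> Pow Y. even (card R)} = {T. T \<subseteq> Y \<and> {} \<subseteq> T \<and> even (card T)}" by auto
  have o1: "{R \<in> Pow Y. odd (card R)} = {T. T \<subseteq> Y \<and> {} \<subseteq> T \<and> odd (card T)}" by auto
  have PY: "{R \<in> Pow Y. even (card R)} \<union> {R \<in> Pow Y. odd (card R)} = Pow Y" by auto
  have "card ({R \<in> Pow Y. even (card R)} \<union> {R \<in> Pow Y. odd (card R)}) = card {R \<in> Pow Y. even (card R)} + card {R \<in> Pow Y. odd (card R)}"
    by (rule card_Un_disjoint) (use assms(1) in auto)
  then have "card (Pow Y) = card {R \<in> Pow Y. even (card R)} + card {R \<in> Pow Y. odd (card R)}"
    unfolding PY .
  then have s: "2 ^ card Y = card {R \<in> Pow Y. even (card R)} + card {R \<in> Pow Y. odd (card R)}"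
    using assms(1) by (simp add: card_Pow)
  have cY: "card Y \<ge> 1" using assms by (simp add: Suc_leI card_gt_0_iff)
  have "(2::nat) ^ card Y = 2 * 2 ^ (card Y - 1)" using cY by (metis Suc_diff_le diff_Suc_1 power_Suc)
  then show "card {R \<in> Pow Y. even (card R)} = 2 ^ (card Y - 1)"
    and "card {R \<in> Pow Y. odd (card R)} = 2 ^ (card Y - 1)"
    using s eo unfolding e1 o1 by simp_all
qed

lemma count_sign:
  fixes g i m :: int
  assumes fY: "finite Y" and ne: "Y \<noteq> {}" and fE: "finite E" and dj: "E \<inter> Y = {}"
  shows "card {R \<in> Pow Y. [(-1) ^ card (E \<union> R) * g = i] (mod m)}
       = 2 ^ (card Y - 1) * (of_bool ([g = i] (mod m)) + of_bool ([- g = i] (mod m)))"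
proof -
  define s :: int where "s = (-1) ^ card E"
  have cu: "card (E \<union> R) = card E + card R" if "R \<in> Pow Y" for R
    using card_Un_disjoint[OF fE, of R] that fY dj finite_subset by fastforce
  have "{R \<in> Pow Y. [(-1) ^ card (E \<union> R) * g = i] (mod m)}
      = {R \<in> Pow Y. even (card R) \<and> [s * g = i] (mod m)} \<union> {R \<in> Pow Y. odd (card R) \<and> [- (s * g) = i] (mod m)}"
    (is "?L = ?A \<union> ?B")
  proof
    show "?L \<subseteq> ?A \<union> ?B"
    proof
      fix R assume R: "R \<in> ?L"
      then have RP: "R \<in> Pow Y" and c: "[(-1) ^ card (E \<union> R) * g = i] (mod m)" by auto
      from c have "[(-1) ^ (card E + card R) * g = i] (mod m)" unfolding cu[OF RP] .
      then show "R \<in> ?A \<union> ?B" using R unfolding s_def by (cases "even (card R)") (auto simp: power_add)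
    qed
    show "?A \<union> ?B \<subseteq> ?L"
    proof
      fix R assume R: "R \<in> ?A \<union> ?B"
      then have "[(-1) ^ (card E + card R) * g = i] (mod m)" unfolding s_def by (auto simp: power_add)
      moreover have RP: "R \<in> Pow Y" using R by auto
      ultimately show "R \<in> ?L" unfolding cu[OF RP, symmetric] by simp
    qed
  qed
  moreover have "?A \<inter> ?B = {}" by auto
  moreover have "finite ?A" "finite ?B" using fY by auto
  ultimately have cL: "card ?L = card ?A + card ?B" by (simp add: card_Un_disjoint)
  have cA: "card ?A = of_bool ([s * g = i] (mod m)) * 2 ^ (card Y - 1)"
    using even_subsets(1)[OF fY ne] by (cases "[s * g = i] (mod m)") simp_all
  have cB: "card ?B = of_bool ([- (s * g) = i] (mod m)) * 2 ^ (card Y - 1)"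
    using even_subsets(2)[OF fY ne] by (cases "[- (s * g) = i] (mod m)") simp_all
  have sw: "of_bool ([s * g = i] (mod m)) + of_bool ([- (s * g) = i] (mod m))
      = (of_bool ([g = i] (mod m)) + of_bool ([- g = i] (mod m)) :: nat)"
    unfolding s_def by (cases "even (card E)") simp_all
  have "card ?L = (of_bool ([s * g = i] (mod m)) + of_bool ([- (s * g) = i] (mod m))) * 2 ^ (card Y - 1)"
    unfolding cL cA cB by (rule add_mult_distrib[symmetric])
  also have "\<dots> = (of_bool ([g = i] (mod m)) + of_bool ([- g = i] (mod m))) * 2 ^ (card Y - 1)"
    unfolding sw ..
  finally show ?thesis by (simp only: mult.commute)
qed

lemma Gv_local:
  assumes "\<And>x. x \<in> {P, Q, P + Q, P + P} \<Longrightarrow> x \<in> D \<longleftrightarrow> x \<in> D'"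
  shows "Gv P Q D = Gv P Q D'"
proof -
  have "P \<in> D \<longleftrightarrow> P \<in> D'" "Q \<in> D \<longleftrightarrow> Q \<in> D'" "P + Q \<in> D \<longleftrightarrow> P + Q \<in> D'" "P + P \<in> D \<longleftrightarrow> P + P \<in> D'"
    using assms by auto
  then show ?thesis unfolding Gv_def by simp
qed




lemma cong_small_iff:
  fixes a b m :: int
  assumes "\<bar>a - b\<bar> < m"
  shows "[a = b] (mod m) \<longleftrightarrow> a = b"
proof
  assume "[a = b] (mod m)"
  then have "m dvd (a - b)" by (simp add: cong_iff_dvd_diff)
  show "a = b"
  proof (rule ccontr)
    assume "a \<noteq> b"
    then have "\<bar>m\<bar> \<le> \<bar>a - b\<bar>" using dvd_imp_le_int[of "a - b" m] \<open>m dvd (a - b)\<close> by simp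
    then show False using assms by simp
  qed
qed simp

lemma rib_cong_Gv:
  fixes p d e n :: nat
  assumes p: "prime p" and oddp: "odd p" and n: "n = 2 * p ^ d + p ^ e" and D: "D \<subseteq> {1..<n}"
  shows "[int (rib n D) = (-1) ^ card D * Gv (p ^ d) (p ^ e) D] (mod int p)"
proof -
  have n': "n = p ^ d + (p ^ d + p ^ e)" using n by simp
  have "(-1) ^ card D * int (rib n D) = Ssum n D" by (rule rib_Ssum[OF D])
  then have H: "[(-1) ^ card D * int (rib n D) = Gv (p ^ d) (p ^ e) D] (mod int p)"
    using Ssum_n[OF p oddp, of d e D] unfolding n'[symmetric] by simp
  have "[(-1) ^ card D * ((-1) ^ card D * int (rib n D)) = (-1) ^ card D * Gv (p ^ d) (p ^ e) D] (mod int p)"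
    by (rule cong_scalar_left[OF H])
  moreover have "(-1::int) ^ card D * ((-1) ^ card D * int (rib n D)) = int (rib n D)"
    by (simp add: mult.assoc[symmetric] power_add[symmetric] flip: mult_2)
  ultimately show ?thesis by simp
qed

lemma c_count_Gv:
  fixes p d e n :: nat
  assumes p: "prime p" and oddp: "odd p" and n: "n = 2 * p ^ d + p ^ e"
  shows "c_count p i n = card {D \<in> Pow {1..<n}. [(-1) ^ card D * Gv (p ^ d) (p ^ e) D = i] (mod int p)}"
proof -
  have n1: "1 \<le> n" using n p by (simp add: prime_gt_0_nat Suc_leI)
  have "c_count p i n = card {\<alpha> \<in> compositions n. [int (rib n (comp_descents \<alpha>)) = i] (mod int p)}"
    unfolding c_count_def by (rule arg_cong[where f = card]) (auto simp: ribbon_rib)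
  also have "\<dots> = card {D \<in> Pow {1..<n}. [int (rib n D) = i] (mod int p)}"
    by (rule comp_count[OF n1])
  also have "\<dots> = card {D \<in> Pow {1..<n}. [(-1) ^ card D * Gv (p ^ d) (p ^ e) D = i] (mod int p)}"
  proof (rule arg_cong[where f = card], rule Collect_cong)
    fix D
    show "(D \<in> Pow {1..<n} \<and> [int (rib n D) = i] (mod int p)) =
          (D \<in> Pow {1..<n} \<and> [(-1) ^ card D * Gv (p ^ d) (p ^ e) D = i] (mod int p))"
    proof (cases "D \<in> Pow {1..<n}")
      case True
      then have K: "[int (rib n D) = (-1) ^ card D * Gv (p ^ d) (p ^ e) D] (mod int p)"
        using rib_cong_Gv[OF p oddp n] by blast
      have "[int (rib n D) = i] (mod int p) \<longleftrightarrow> [(-1) ^ card D * Gv (p ^ d) (p ^ e) D = i] (mod int p)"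
      proof
        assume "[int (rib n D) = i] (mod int p)"
        then show "[(-1) ^ card D * Gv (p ^ d) (p ^ e) D = i] (mod int p)"
          using cong_trans[OF cong_sym[OF K]] by blast
      next
        assume "[(-1) ^ card D * Gv (p ^ d) (p ^ e) D = i] (mod int p)"
        then show "[int (rib n D) = i] (mod int p)" using cong_trans[OF K] by blast
      qed
      then show ?thesis using True by simp
    qed simp
  qed
  finally show ?thesis .
qed




lemma sum_X:
  fixes P Q :: nat and h :: "int \<Rightarrow> nat"
  assumes P1: "1 \<le> P" and Q1: "1 \<le> Q" and PQ: "P \<noteq> Q" and QPP: "Q \<noteq> P + P"
  shows "(\<Sum>E\<in>Pow {P, P + P, Q, P + Q}. h (Gv P Q E)) = 6 * h 0 + 2 * h 1 + 6 * h (-1) + 2 * h (-2)"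
proof -
  have d: "P \<noteq> P + P" "P \<noteq> P + Q" "Q \<noteq> P + Q" "P + P \<noteq> P + Q" "P + P \<noteq> Q" "Q \<noteq> P" "P + Q \<noteq> P" "P + Q \<noteq> Q"
    "P + Q \<noteq> P + P" "P + P \<noteq> P"
    using assms by auto
  show ?thesis using d PQ QPP
    by (simp add: sum_pow_insert Gv_def)
qed




lemma c_count_big:
  fixes p d e n :: nat and i :: int
  assumes p: "prime p" and oddp: "odd p" and de: "d \<noteq> e" and n: "n = 2 * p ^ d + p ^ e" and n5: "5 < n"
  shows "c_count p i n = 2 ^ (n - 6) * (6 * (of_bool ([0 = i] (mod int p)) + of_bool ([- 0 = i] (mod int p)))
      + 2 * (of_bool ([1 = i] (mod int p)) + of_bool ([- 1 = i] (mod int p)))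
      + 6 * (of_bool ([- 1 = i] (mod int p)) + of_bool ([- (- 1) = i] (mod int p)))
      + 2 * (of_bool ([- 2 = i] (mod int p)) + of_bool ([- (- 2) = i] (mod int p))))"
proof -
  define P where "P = p ^ d"
  define Q where "Q = p ^ e"
  define h :: "int \<Rightarrow> nat" where "h = (\<lambda>g. of_bool ([g = i] (mod int p)) + of_bool ([- g = i] (mod int p)))"
  have p1: "1 < p" using prime_gt_1_nat[OF p] by simp
  have P1: "1 \<le> P" "1 \<le> Q" unfolding P_def Q_def using p1 by simp_all
  have PQ: "P \<noteq> Q" unfolding P_def Q_def using de p1 by (simp add: power_inject_exp)
  have oQ: "odd Q" unfolding Q_def using oddp by simp
  have QPP: "Q \<noteq> P + P" using oQ by auto
  have nPQ: "n = P + P + Q" unfolding n P_def Q_def by simp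
  define X where "X = {P, P + P, Q, P + Q}"
  define Y where "Y = {1..<n} - X"
  have Xsub: "X \<subseteq> {1..<n}" unfolding X_def nPQ using P1 by auto
  have U: "{1..<n} = X \<union> Y" unfolding Y_def using Xsub by blast
  have dj: "X \<inter> Y = {}" unfolding Y_def by blast
  have fX: "finite X" and fY: "finite Y" unfolding X_def Y_def by auto
  have cX: "card X = 4" unfolding X_def using P1 PQ QPP by auto
  have cY: "card Y = n - 5" unfolding Y_def using card_Diff_subset[OF fX Xsub] cX by simp
  then have Yne: "Y \<noteq> {}" using n5 by auto
  have "c_count p i n = card {D \<in> Pow (X \<union> Y). [(-1) ^ card D * Gv P Q D = i] (mod int p)}"
    unfolding c_count_Gv[OF p oddp n] U[symmetric] P_def Q_def ..
  also have "\<dots> = (\<Sum>E\<in>Pow X. card {R \<in> Pow Y. [(-1) ^ card (E \<union> R) * Gv P Q (E \<union> R) = i] (mod int p)})"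
    by (rule pow_split[OF fX fY dj])
  also have "\<dots> = (\<Sum>E\<in>Pow X. card {R \<in> Pow Y. [(-1) ^ card (E \<union> R) * Gv P Q E = i] (mod int p)})"
  proof (rule sum.cong[OF refl], rule arg_cong[where f = card], rule Collect_cong)
    fix E R assume E: "E \<in> Pow X"
    show "(R \<in> Pow Y \<and> [(-1) ^ card (E \<union> R) * Gv P Q (E \<union> R) = i] (mod int p)) =
          (R \<in> Pow Y \<and> [(-1) ^ card (E \<union> R) * Gv P Q E = i] (mod int p))"
    proof (cases "R \<in> Pow Y")
      case True
      have "Gv P Q (E \<union> R) = Gv P Q E"
      proof (rule Gv_local)
        fix x assume "x \<in> {P, Q, P + Q, P + P}"
        then have "x \<in> X" unfolding X_def by auto
        then show "x \<in> E \<union> R \<longleftrightarrow> x \<in> E" using True dj by auto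
      qed
      then show ?thesis by simp
    qed simp
  qed
  also have "\<dots> = (\<Sum>E\<in>Pow X. 2 ^ (card Y - 1) * h (Gv P Q E))"
  proof (rule sum.cong[OF refl])
    fix E assume E: "E \<in> Pow X"
    have "finite E" using E fX finite_subset by blast
    moreover have "E \<inter> Y = {}" using E dj by blast
    ultimately show "card {R \<in> Pow Y. [(-1) ^ card (E \<union> R) * Gv P Q E = i] (mod int p)} = 2 ^ (card Y - 1) * h (Gv P Q E)"
      unfolding h_def by (rule count_sign[OF fY Yne])
  qed
  also have "\<dots> = 2 ^ (card Y - 1) * (\<Sum>E\<in>Pow X. h (Gv P Q E))"
    by (simp add: sum_distrib_left)
  also have "(\<Sum>E\<in>Pow X. h (Gv P Q E)) = 6 * h 0 + 2 * h 1 + 6 * h (-1) + 2 * h (-2)"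
    unfolding X_def by (rule sum_X[OF P1 PQ QPP])
  finally show ?thesis unfolding h_def cY by simp
qed

lemma card_filter_sum: "finite A \<Longrightarrow> card {x \<in> A. P x} = (\<Sum>x\<in>A. of_bool (P x))"
proof -
  assume f: "finite A"
  have "card {x \<in> A. P x} = (\<Sum>x\<in>{x \<in> A. P x}. (1::nat))" by simp
  also have "\<dots> = (\<Sum>x\<in>A. if P x then 1 else 0)" using f by (rule sum.inter_filter)
  also have "\<dots> = (\<Sum>x\<in>A. of_bool (P x))" by (rule sum.cong) auto
  finally show ?thesis .
qed

lemma c_count_5:
  "c_count 3 i 5 = (\<Sum>E\<in>Pow {1, 2, 3, 4}. of_bool ([(-1) ^ card E * Gv (3 ^ 0) (3 ^ 1) E = i] (mod int 3)))"
proof -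
  have A: "c_count 3 i 5 = card {D \<in> Pow {1..<5}. [(-1) ^ card D * Gv (3 ^ 0) (3 ^ 1) D = i] (mod int 3)}"
    by (rule c_count_Gv) auto
  have B: "{1..<5::nat} = {1, 2, 3, 4}" by auto
  have C: "card {D \<in> Pow {1, 2, 3, 4}. [(-1) ^ card D * Gv (3 ^ 0) (3 ^ 1) D = i] (mod int 3)}
      = (\<Sum>E\<in>Pow {1, 2, 3, 4}. of_bool ([(-1) ^ card E * Gv (3 ^ 0) (3 ^ 1) E = i] (mod int 3)))"
    by (rule card_filter_sum) simp
  show ?thesis using A[unfolded B C] .
qed

lemma c5_vals: "c_count 3 0 5 = 6" "c_count 3 1 5 = 8" "c_count 3 2 5 = 2"
  unfolding c_count_5 by (simp_all del: sum_of_bool_eq add: sum_pow_insert Gv_def cong_def)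




lemma prime3: "prime (3::nat)"
proof -
  have "\<forall>n\<in>{2..<3}. \<not> n dvd (3::nat)"
  proof
    fix n :: nat assume "n \<in> {2..<3}"
    then have "n = 2" by auto
    then show "\<not> n dvd 3" by simp
  qed
  then show ?thesis by (simp add: prime_nat_iff')
qed

theorem corollary3p9:
  fixes p d e n :: nat
  assumes "prime p" and "odd p" and "d \<noteq> e" and "n = 2 * p ^ d + p ^ e"
  shows "(p = 3 \<and> n = 5 \<longrightarrow>
            c_count 3 0 5 = 6 \<and> c_count 3 1 5 = 8 \<and> c_count 3 2 5 = 2)
       \<and> (p = 3 \<and> n > 5 \<longrightarrow>
            c_count 3 0 n = 6 * 2 ^ (n - 5) \<and>
            c_count 3 1 n = 5 * 2 ^ (n - 5) \<and>
            c_count 3 (-1) n = 5 * 2 ^ (n - 5))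
       \<and> (p > 3 \<longrightarrow>
            c_count p 0 n = 6 * 2 ^ (n - 5) \<and>
            c_count p 1 n = 4 * 2 ^ (n - 5) \<and>
            c_count p (-1) n = 4 * 2 ^ (n - 5) \<and>
            c_count p 2 n = 2 ^ (n - 5) \<and>
            c_count p (-2) n = 2 ^ (n - 5) \<and>
            (\<forall>i::int. \<not> [i = 0] (mod int p) \<and> \<not> [i = 1] (mod int p) \<and>
                \<not> [i = -1] (mod int p) \<and> \<not> [i = 2] (mod int p) \<and>
                \<not> [i = -2] (mod int p) \<longrightarrow> c_count p i n = 0))"
proof (intro conjI impI)
  assume "p = 3 \<and> n = 5"
  show "c_count 3 0 5 = 6" "c_count 3 1 5 = 8" "c_count 3 2 5 = 2" using c5_vals by simp_all
next
  assume h: "p = 3 \<and> n > 5"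
  then have n3: "n = 2 * 3 ^ d + 3 ^ e" and n5: "5 < n" using assms(4) by auto
  obtain k where k: "n = k + 6" using n5 by (intro that[of "n - 6"]) simp
  have pw: "(2::nat) ^ (n - 5) = 2 * 2 ^ (n - 6)" using k by simp
  note c = c_count_big[OF prime3 _ assms(3) n3 n5]
  show "c_count 3 0 n = 6 * 2 ^ (n - 5)" using c[of 0] by (simp add: cong_def pw)
  show "c_count 3 1 n = 5 * 2 ^ (n - 5)" using c[of 1] by (simp add: cong_def pw)
  show "c_count 3 (-1) n = 5 * 2 ^ (n - 5)" using c[of "-1"] by (simp add: cong_def pw)
next
  assume p3: "p > 3"
  have p5: "4 < int p"
  proof -
    have "p \<noteq> 4" using assms(2) by auto
    then show ?thesis using p3 by simp
  qed
  have n5: "5 < n"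
  proof -
    have "1 \<le> p ^ d" using p3 by simp
    moreover have "p \<le> p ^ e \<or> e = 0" using p3 by (cases e) auto
    moreover have "p \<le> p ^ d \<or> d = 0" using p3 by (cases d) auto
    ultimately show ?thesis using assms(3,4) p3 by auto
  qed
  obtain k where k: "n = k + 6" using n5 by (intro that[of "n - 6"]) simp
  have pw: "(2::nat) ^ (n - 5) = 2 * 2 ^ (n - 6)" using k by simp
  note c = c_count_big[OF assms(1,2,3,4) n5]
  note cs = cong_small_iff[where m = "int p"]
  show "c_count p 0 n = 6 * 2 ^ (n - 5)" using c[of 0] p5 by (simp add: cs pw)
  show "c_count p 1 n = 4 * 2 ^ (n - 5)" using c[of 1] p5 by (simp add: cs pw)
  show "c_count p (-1) n = 4 * 2 ^ (n - 5)" using c[of "-1"] p5 by (simp add: cs pw)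
  show "c_count p 2 n = 2 ^ (n - 5)" using c[of 2] p5 by (simp add: cs pw)
  show "c_count p (-2) n = 2 ^ (n - 5)" using c[of "-2"] p5 by (simp add: cs pw)
  show "\<forall>i::int. \<not> [i = 0] (mod int p) \<and> \<not> [i = 1] (mod int p) \<and>
                \<not> [i = -1] (mod int p) \<and> \<not> [i = 2] (mod int p) \<and>
                \<not> [i = -2] (mod int p) \<longrightarrow> c_count p i n = 0"
  proof (intro allI impI)
    fix i :: int
    assume a: "\<not> [i = 0] (mod int p) \<and> \<not> [i = 1] (mod int p) \<and>
                \<not> [i = -1] (mod int p) \<and> \<not> [i = 2] (mod int p) \<and> \<not> [i = -2] (mod int p)"
    then have "\<not> [0 = i] (mod int p)" "\<not> [1 = i] (mod int p)" "\<not> [-1 = i] (mod int p)"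
      "\<not> [2 = i] (mod int p)" "\<not> [-2 = i] (mod int p)" by (simp_all add: cong_sym_eq)
    then show "c_count p i n = 0" using c[of i] by simp
  qed
qed


end
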